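(* Let $F_k$ be the free group with basis $a_1,\ldots,a_k$, let $H_1, H_2 < F_k$ be finitely generated subgroups, and let $G < H_1 \cap H_2$ be a subgroup of finite index in $H_1$. Suppose every divisor of $[H_1 : G]$ other than $1$ is larger than $|V(\operatorname{Core}(H_2))|$. Then $H_1 \leq H_2$.
   Context: For a subgroup $\Gamma < F_k$, $X_\Gamma$ is the Schreier graph of $F_k$ with respect to $\Gamma$ and the generators $a_1,\ldots,a_k$: vertices are cosets of $\Gamma$, with an oriented edge labelled $a_j$ from $g\Gamma$ to $a_j g\Gamma$. The core of a graph is the subgraph of all vertices and edges contained in some cycle, and $\operatorname{Core}(\Gamma)$ is the core of $X_\Gamma$. $V(\cdot)$ denotes the vertex set. *)

theory Defs
  imports "HOL-Algebra.Algebra"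
begin

text \<open>A letter (j, True) stands for a_j, the letter (j, False) for a_j inverse.\<close>
type_synonym letter = "nat \<times> bool"

definition inv_letter :: "letter \<Rightarrow> letter" where
  "inv_letter x = (fst x, \<not> snd x)"

fun reduced :: "letter list \<Rightarrow> bool" where
  "reduced [] = True"
| "reduced [x] = True"
| "reduced (x # y # ys) = (y \<noteq> inv_letter x \<and> reduced (y # ys))"

fun red_cons :: "letter \<Rightarrow> letter list \<Rightarrow> letter list" where
  "red_cons x [] = [x]"
| "red_cons x (y # ys) = (if y = inv_letter x then ys else x # y # ys)"

definition red :: "letter list \<Rightarrow> letter list" where
  "red w = foldr red_cons w []"

definition free_group :: "nat \<Rightarrow> letter list monoid" where
  "free_group k = \<lparr> carrier = {w. reduced w \<and> (\<forall>x\<in>set w. fst x < k)},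
                    monoid.mult = (\<lambda>u v. red (u @ v)), one = [] \<rparr>"

definition fin_gen_subgroup :: "nat \<Rightarrow> letter list set \<Rightarrow> bool" where
  "fin_gen_subgroup k H \<longleftrightarrow> subgroup H (free_group k) \<and>
     (\<exists>S. finite S \<and> S \<subseteq> carrier (free_group k) \<and> H = generate (free_group k) S)"

definition schreier_vertices :: "nat \<Rightarrow> letter list set \<Rightarrow> letter list set set" where
  "schreier_vertices k \<Gamma> = {g <#\<^bsub>free_group k\<^esub> \<Gamma> | g. g \<in> carrier (free_group k)}"

text \<open>Traversing from vertex C along letter x: forward along the a_j-edge
  (C to a_j C) for x = (j,True), backward along an a_j-edge (C to a_j^-1 C) for x = (j,False).\<close>
definition letter_act :: "nat \<Rightarrow> letter \<Rightarrow> letter list set \<Rightarrow> letter list set" where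
  "letter_act k x C = [x] <#\<^bsub>free_group k\<^esub> C"

fun walk_verts :: "nat \<Rightarrow> letter list set \<Rightarrow> letter list \<Rightarrow> letter list set list" where
  "walk_verts k v [] = [v]"
| "walk_verts k v (x # xs) = v # walk_verts k (letter_act k x v) xs"

definition cyclically_reduced :: "letter list \<Rightarrow> bool" where
  "cyclically_reduced w \<longleftrightarrow> reduced w \<and> (w \<noteq> [] \<longrightarrow> hd w \<noteq> inv_letter (last w))"

text \<open>A cycle in X_Gamma: a nonempty closed walk without backtracking (cyclically reduced).\<close>
definition schreier_cycle :: "nat \<Rightarrow> letter list set \<Rightarrow> letter list set \<Rightarrow> letter list \<Rightarrow> bool" where
  "schreier_cycle k \<Gamma> v w \<longleftrightarrow> v \<in> schreier_vertices k \<Gamma> \<and> w \<noteq> [] \<and>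
     (\<forall>x\<in>set w. fst x < k) \<and> cyclically_reduced w \<and> last (walk_verts k v w) = v"

text \<open>V(Core(Gamma)): vertices of X_Gamma lying on some cycle.\<close>
definition core_vertices :: "nat \<Rightarrow> letter list set \<Rightarrow> letter list set set" where
  "core_vertices k \<Gamma> = {u. \<exists>v w. schreier_cycle k \<Gamma> v w \<and> u \<in> set (walk_verts k v w)}"

end

theory Submission
  imports Defs
begin

lemma inv_letter_inv[simp]: "inv_letter (inv_letter x) = x"
  by (simp add: inv_letter_def)
lemma inv_letter_neq[simp]: "inv_letter x \<noteq> x"
  by (cases x) (simp add: inv_letter_def)
lemma inv_letter_eq_iff: "(inv_letter x = y) \<longleftrightarrow> (x = inv_letter y)"
  by auto
lemma fst_inv_letter[simp]: "fst (inv_letter x) = fst x"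
  by (simp add: inv_letter_def)

definition inv_w :: "letter list \<Rightarrow> letter list" where
  "inv_w w = rev (map inv_letter w)"

lemma inv_w_simps[simp]: "inv_w [] = []" "inv_w (x # w) = inv_w w @ [inv_letter x]"
  "inv_w (a @ b) = inv_w b @ inv_w a" "inv_w (inv_w w) = w" "length (inv_w w) = length w"
  by (auto simp: inv_w_def rev_map[symmetric] comp_def)

lemma set_inv_w: "x \<in> set (inv_w w) \<longleftrightarrow> inv_letter x \<in> set w"
  by (auto simp: inv_w_def image_iff) (metis inv_letter_inv)

lemma inv_w_letters[simp]: "(\<forall>x\<in>set (inv_w w). P (fst x)) \<longleftrightarrow> (\<forall>x\<in>set w. P (fst x))"
  by (auto simp: inv_w_def)

lemma reduced_Cons: "reduced (x # w) \<longleftrightarrow> reduced w \<and> (w = [] \<or> hd w \<noteq> inv_letter x)"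
  by (cases w) auto

lemma reduced_append: "reduced (a @ b) \<longleftrightarrow> reduced a \<and> reduced b \<and> (a = [] \<or> b = [] \<or> hd b \<noteq> inv_letter (last a))"
  by (induction a) (auto simp: reduced_Cons)

lemma reduced_rev: "reduced (rev w) \<longleftrightarrow> reduced w"
proof (induction w)
  case (Cons x w)
  then show ?case
    by (cases w) (auto simp: reduced_append reduced_Cons inv_letter_eq_iff)
qed simp

lemma reduced_map_inv: "reduced (map inv_letter w) \<longleftrightarrow> reduced w"
  by (induction w) (auto simp: reduced_Cons hd_map inv_letter_eq_iff)

lemma reduced_inv_w[simp]: "reduced (inv_w w) \<longleftrightarrow> reduced w"
  by (simp add: inv_w_def reduced_rev reduced_map_inv)

lemma reduced_red_cons: "reduced w \<Longrightarrow> reduced (red_cons x w)"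
  by (cases w) (auto simp: reduced_Cons)

abbreviation F :: "letter list \<Rightarrow> letter list \<Rightarrow> letter list" where
  "F u r \<equiv> foldr red_cons u r"

lemma reduced_F: "reduced r \<Longrightarrow> reduced (F u r)"
  by (induction u) (auto simp: reduced_red_cons)

lemma reduced_red[simp]: "reduced (red w)"
  by (simp add: red_def reduced_F)

lemma F_reduced_id: "reduced u \<Longrightarrow> F u [] = u"
proof (induction u)
  case (Cons x u)
  then show ?case by (cases u) (auto simp: reduced_Cons)
qed simp

lemma red_id: "reduced w \<Longrightarrow> red w = w"
  by (simp add: red_def F_reduced_id)

lemma red_append_F: "red (u @ v) = F u (red v)"
  by (simp add: red_def)

lemma inv_letter_neq2[simp]: "x \<noteq> inv_letter x"
  using inv_letter_neq by metis

lemma red_cons_nocancel: "w = [] \<or> hd w \<noteq> inv_letter x \<Longrightarrow> red_cons x w = x # w"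
  by (cases w) auto

lemma red_cons_cancel: "reduced r \<Longrightarrow> red_cons x (red_cons (inv_letter x) r) = r"
proof (cases r)
  case (Cons y r')
  assume "reduced r"
  show ?thesis
  proof (cases "y = x")
    case True
    then show ?thesis using Cons \<open>reduced r\<close> by (auto simp: reduced_Cons intro: red_cons_nocancel)
  next
    case False
    then show ?thesis using Cons by auto
  qed
qed simp

lemma red_cons_cancel': "reduced r \<Longrightarrow> red_cons (inv_letter x) (red_cons x r) = r"
  using red_cons_cancel[of r "inv_letter x"] by simp

lemma F_red_cons: "reduced s \<Longrightarrow> reduced r \<Longrightarrow> F (red_cons x s) r = red_cons x (F s r)"
proof (cases s)
  case (Cons y s')
  assume s: "reduced s" and r: "reduced r"
  show ?thesis
  proof (cases "y = inv_letter x")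
    case True
    have "reduced (F s' r)" using r by (rule reduced_F)
    then show ?thesis using Cons True by (simp add: red_cons_cancel)
  qed (use Cons in simp)
qed simp

lemma F_red: "reduced r \<Longrightarrow> F (red u) r = F u r"
proof (induction u)
  case Nil then show ?case by (simp add: red_def)
next
  case (Cons x u)
  have "red (x # u) = red_cons x (red u)" by (simp add: red_def)
  then show ?case using Cons by (simp add: F_red_cons)
qed

lemma red_red[simp]: "red (red w) = red w"
  by (simp add: red_id)

lemma red_append_left[simp]: "red (red u @ v) = red (u @ v)"
  by (simp add: red_append_F F_red)

lemma red_append_right[simp]: "red (u @ red v) = red (u @ v)"
  by (simp add: red_append_F)

lemma red_inv_cancel: "red (inv_w w @ w) = []"
proof (induction w)
  case Nil then show ?case by (simp add: red_def)
next
  case (Cons x w)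
  have "red (inv_w (x # w) @ x # w) = F (inv_w w) (red_cons (inv_letter x) (red_cons x (red w)))"
    by (simp add: red_append_F red_def)
  also have "\<dots> = F (inv_w w) (red w)" by (simp add: red_cons_cancel')
  also have "\<dots> = []" using Cons by (simp add: red_append_F)
  finally show ?case .
qed

lemma red_inv_cancel2: "red (w @ inv_w w) = []"
  using red_inv_cancel[of "inv_w w"] by simp

lemma set_red_cons: "set (red_cons x w) \<subseteq> insert x (set w)"
  by (cases w) auto

lemma set_F: "set (F u r) \<subseteq> set u \<union> set r"
  by (induction u) (use set_red_cons in fastforce)+

lemma set_red: "set (red w) \<subseteq> set w"
  using set_F[of w "[]"] by (simp add: red_def)


lemma fg_carrier: "w \<in> carrier (free_group k) \<longleftrightarrow> reduced w \<and> (\<forall>x\<in>set w. fst x < k)"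
  by (simp add: free_group_def)
lemma fg_mult: "x \<otimes>\<^bsub>free_group k\<^esub> y = red (x @ y)"
  by (simp add: free_group_def)
lemma fg_one: "\<one>\<^bsub>free_group k\<^esub> = []"
  by (simp add: free_group_def)

lemma red_letters: "\<forall>x\<in>set w. fst x < k \<Longrightarrow> \<forall>x\<in>set (red w). fst x < k"
  using set_red by blast

lemma inv_w_lt: "\<forall>x\<in>set w. fst x < k \<Longrightarrow> \<forall>x\<in>set (inv_w w). fst x < k"
  by (auto simp: inv_w_def)

lemma group_fg: "group (free_group k)"
proof (rule groupI)
  fix x y assume "x \<in> carrier (free_group k)" "y \<in> carrier (free_group k)"
  then show "x \<otimes>\<^bsub>free_group k\<^esub> y \<in> carrier (free_group k)"
    using set_red[of "x @ y"] by (auto simp: fg_carrier fg_mult)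
next
  show "\<one>\<^bsub>free_group k\<^esub> \<in> carrier (free_group k)" by (simp add: fg_carrier fg_one)
next
  fix x y z
  show "x \<otimes>\<^bsub>free_group k\<^esub> y \<otimes>\<^bsub>free_group k\<^esub> z = x \<otimes>\<^bsub>free_group k\<^esub> (y \<otimes>\<^bsub>free_group k\<^esub> z)"
    by (simp add: fg_mult)
next
  fix x assume "x \<in> carrier (free_group k)"
  then show "\<one>\<^bsub>free_group k\<^esub> \<otimes>\<^bsub>free_group k\<^esub> x = x"
    by (simp add: fg_carrier fg_mult fg_one red_id)
next
  fix x assume "x \<in> carrier (free_group k)"
  then show "\<exists>y\<in>carrier (free_group k). y \<otimes>\<^bsub>free_group k\<^esub> x = \<one>\<^bsub>free_group k\<^esub>"
    using inv_w_lt[of x k] by (intro bexI[of _ "inv_w x"]) (simp_all add: fg_carrier fg_mult fg_one red_inv_cancel)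
qed

interpretation fg: group "free_group k" for k
  by (rule group_fg)

lemma inv_w_carrier: "w \<in> carrier (free_group k) \<Longrightarrow> inv_w w \<in> carrier (free_group k)"
  unfolding fg_carrier using inv_w_lt[of w k] by simp

lemma fg_inv: "w \<in> carrier (free_group k) \<Longrightarrow> inv\<^bsub>free_group k\<^esub> w = inv_w w"
  by (rule fg.inv_equality) (auto simp: fg_mult fg_one red_inv_cancel inv_w_carrier)

lemma append_carrier: "a @ b \<in> carrier (free_group k) \<Longrightarrow> a \<in> carrier (free_group k) \<and> b \<in> carrier (free_group k)"
  by (auto simp: fg_carrier reduced_append)

lemma fg_mult_reduced: "reduced (x @ y) \<Longrightarrow> x \<otimes>\<^bsub>free_group k\<^esub> y = x @ y"
  by (simp add: fg_mult red_id)

lemma cancel_struct: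
  assumes "reduced u" "reduced v"
  shows "\<exists>a b c. u = a @ b \<and> v = inv_w b @ c \<and> red (u @ v) = a @ c"
  using assms(1)
proof (induction u)
  case Nil then show ?case using assms(2) by (auto simp: red_id)
next
  case (Cons x u)
  then obtain a b c where abc: "u = a @ b" "v = inv_w b @ c" "red (u @ v) = a @ c"
    by (auto simp: reduced_Cons)
  have r: "red ((x # u) @ v) = red_cons x (a @ c)"
    using abc(3) by (simp add: red_def)
  show ?case
  proof (cases a)
    case (Cons a1 a')
    then have "hd (a @ c) \<noteq> inv_letter x" using Cons.prems abc(1) by (auto simp: reduced_Cons)
    then have "red_cons x (a @ c) = x # a @ c" using Cons by simp
    then show ?thesis using r abc by (intro exI[of _ "x # a"] exI[of _ b] exI[of _ c]) auto
  next
    case Nil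
    show ?thesis
    proof (cases "c \<noteq> [] \<and> hd c = inv_letter x")
      case True
      then obtain c' where c: "c = inv_letter x # c'" by (cases c) auto
      then show ?thesis using r abc Nil
        by (intro exI[of _ "[]"] exI[of _ "x # b"] exI[of _ c']) auto
    next
      case False
      then have "red_cons x c = x # c" by (cases c) auto
      then show ?thesis using r abc Nil
        by (intro exI[of _ "[x]"] exI[of _ b] exI[of _ c]) auto
    qed
  qed
qed

lemma suffix_F:
  assumes "F u v = q @ s"
  shows "(\<exists>q'. v = q' @ s) \<or> (\<exists>s1 q1. u = q1 @ s1 \<and> s = F s1 v)"
  using assms
proof (induction u arbitrary: q)
  case Nil then show ?case by auto
next
  case (Cons x u)
  show ?case
  proof (cases "F u v")
    case Nil
    then have "red_cons x [] = q @ s" using Cons.prems by simp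
    then have "s = [x] \<or> s = []" by (cases q) auto
    then show ?thesis
    proof
      assume "s = [x]" then show ?thesis using Nil by (intro disjI2 exI[of _ "x # u"] exI[of _ "[]"]) auto
    qed auto
  next
    case (Cons y r)
    note Cons2 = this
    show ?thesis
    proof (cases "y = inv_letter x")
      case True
      then have "F u v = (y # q) @ s" using Cons.prems Cons2 by simp
      from Cons.IH[OF this] show ?thesis by (metis append_Cons)
    next
      case False
      then have e: "x # F u v = q @ s" using Cons.prems Cons2 by simp
      show ?thesis
      proof (cases q)
        case Nil
        then show ?thesis using e Cons2 False by (intro disjI2 exI[of _ "x # u"] exI[of _ "[]"]) auto
      next
        case (Cons q0 q')
        then have "F u v = q' @ s" using e by simp
        from Cons.IH[OF this] show ?thesis by (metis append_Cons)
      qed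
    qed
  qed
qed

lemma cyc_decomp:
  assumes "reduced f" "f \<noteq> []"
  shows "\<exists>u c. c \<noteq> [] \<and> cyclically_reduced c \<and> f = u @ c @ inv_w u"
  using assms
proof (induction "length f" arbitrary: f rule: less_induct)
  case less
  show ?case
  proof (cases "cyclically_reduced f")
    case True then show ?thesis using less.prems by (intro exI[of _ "[]"] exI[of _ f]) auto
  next
    case False
    then have h: "hd f = inv_letter (last f)" using less.prems by (simp add: cyclically_reduced_def)
    obtain x f1 where f1: "f = x # f1" using less.prems by (cases f) auto
    have "f1 \<noteq> []" using h f1 by auto
    then obtain t y where t: "f1 = t @ [y]" by (metis rev_exhaust)
    have y: "y = inv_letter x" using h f1 t by simp
    have ft: "f = [x] @ t @ [inv_letter x]" using f1 t y by simp
    have rt: "reduced t" using less.prems(1) ft by (auto simp: reduced_Cons reduced_append)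
    have tne: "t \<noteq> []" using less.prems(1) ft by (auto simp: reduced_Cons reduced_append)
    obtain u c where "c \<noteq> [] \<and> cyclically_reduced c \<and> t = u @ c @ inv_w u"
      using less.hyps[of t] rt tne ft by auto
    then show ?thesis using ft by (intro exI[of _ "x # u"] exI[of _ c]) auto
  qed
qed

lemma cyc_red_pow:
  assumes "cyclically_reduced c" "c \<noteq> []"
  shows "reduced (concat (replicate n c)) \<and> (n > 0 \<longrightarrow> hd (concat (replicate n c)) = hd c \<and> last (concat (replicate n c)) = last c)"
proof (induction n)
  case (Suc n)
  have rc: "reduced c" "hd c \<noteq> inv_letter (last c)" using assms by (auto simp: cyclically_reduced_def)
  show ?case
  proof (cases n)
    case 0 then show ?thesis using rc by simp
  next
    case (Suc m)
    then show ?thesis using Suc.IH rc assms(2) by (auto simp: reduced_append)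
  qed
qed simp

lemma red_nil[simp]: "red [] = []" by (simp add: red_def)

lemma red_carrier: "\<forall>x\<in>set w. fst x < k \<Longrightarrow> red w \<in> carrier (free_group k)"
  using set_red[of w] by (auto simp: fg_carrier)

lemma single_carrier: "fst x < k \<Longrightarrow> [x] \<in> carrier (free_group k)"
  by (simp add: fg_carrier)

lemma walk_last:
  assumes "v \<subseteq> carrier (free_group k)" "\<forall>x\<in>set w. fst x < k"
  shows "last (walk_verts k v w) = red (rev w) <#\<^bsub>free_group k\<^esub> v"
  using assms
proof (induction w arbitrary: v)
  case Nil then show ?case using fg.lcos_mult_one[of v k] by (simp add: fg_one)
next
  case (Cons x xs)
  have x: "[x] \<in> carrier (free_group k)" using Cons.prems by (simp add: single_carrier)
  have v': "[x] <#\<^bsub>free_group k\<^esub> v \<subseteq> carrier (free_group k)"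
    using fg.l_coset_subset_G[OF Cons.prems(1) x] .
  have ne: "walk_verts k u ws \<noteq> []" for u ws by (cases ws) auto
  have "last (walk_verts k v (x # xs)) = last (walk_verts k ([x] <#\<^bsub>free_group k\<^esub> v) xs)"
    using ne by (simp add: letter_act_def)
  also have "\<dots> = red (rev xs) <#\<^bsub>free_group k\<^esub> ([x] <#\<^bsub>free_group k\<^esub> v)"
    using Cons.IH[OF v'] Cons.prems by simp
  also have "\<dots> = (red (rev xs) \<otimes>\<^bsub>free_group k\<^esub> [x]) <#\<^bsub>free_group k\<^esub> v"
    using Cons.prems x by (intro fg.lcos_m_assoc) (simp_all add: red_carrier)
  also have "red (rev xs) \<otimes>\<^bsub>free_group k\<^esub> [x] = red (rev (x # xs))"
    by (simp add: fg_mult)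
  finally show ?case .
qed

lemma walk_set:
  assumes "u \<in> set (walk_verts k v w)"
  shows "\<exists>w1 w2. w = w1 @ w2 \<and> u = last (walk_verts k v w1)"
  using assms
proof (induction w arbitrary: v)
  case Nil then show ?case by auto
next
  case (Cons x xs)
  show ?case
  proof (cases "u = v")
    case True
    have "x # xs = [] @ (x # xs) \<and> u = last (walk_verts k v [])" using True by simp
    then show ?thesis by blast
  next
    case False
    then have "u \<in> set (walk_verts k (letter_act k x v) xs)" using Cons.prems by simp
    from Cons.IH[OF this] obtain w1 w2 where "xs = w1 @ w2" "u = last (walk_verts k (letter_act k x v) w1)"
      by blast
    moreover have "walk_verts k u ws \<noteq> []" for u ws by (cases ws) auto
    ultimately show ?thesis by (intro exI[of _ "x # w1"] exI[of _ w2]) auto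
  qed
qed

lemma start_in_walk: "v \<in> set (walk_verts k v w)"
  by (cases w) auto

lemma lcos_eq:
  assumes "subgroup H (free_group k)" "a \<in> carrier (free_group k)" "b \<in> carrier (free_group k)"
    "inv\<^bsub>free_group k\<^esub> b \<otimes>\<^bsub>free_group k\<^esub> a \<in> H"
  shows "a <#\<^bsub>free_group k\<^esub> H = b <#\<^bsub>free_group k\<^esub> H"
proof -
  have "a \<in> b <#\<^bsub>free_group k\<^esub> H"
    using subgroup.lcos_module_rev[OF assms(1) group_fg assms(3,2,4)] .
  then show ?thesis using fg.l_repr_independence[OF _ assms(3,1)] by simp
qed

lemma lcos_eqD:
  assumes "subgroup H (free_group k)" "a \<in> carrier (free_group k)" "b \<in> carrier (free_group k)"
    "a <#\<^bsub>free_group k\<^esub> H = b <#\<^bsub>free_group k\<^esub> H"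
  shows "inv\<^bsub>free_group k\<^esub> b \<otimes>\<^bsub>free_group k\<^esub> a \<in> H"
proof -
  have "inv\<^bsub>free_group k\<^esub> a \<otimes>\<^bsub>free_group k\<^esub> a \<in> H"
    using fg.l_inv[OF assms(2)] subgroup.one_closed[OF assms(1)] by (simp only:)
  then have "a \<in> a <#\<^bsub>free_group k\<^esub> H"
    using subgroup.lcos_module_rev[OF assms(1) group_fg assms(2) assms(2)] by blast
  then have "a \<in> b <#\<^bsub>free_group k\<^esub> H" using assms(4) by simp
  then have "\<exists>h\<in>H. a = b \<otimes>\<^bsub>free_group k\<^esub> h"
    unfolding l_coset_def by simp
  then obtain h where h: "h \<in> H" "a = b \<otimes>\<^bsub>free_group k\<^esub> h"
    by (rule bexE)
  have "h \<in> carrier (free_group k)" using subgroup.mem_carrier[OF assms(1) h(1)] .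
  then have "inv\<^bsub>free_group k\<^esub> b \<otimes>\<^bsub>free_group k\<^esub> a = h"
    using h(2) assms(3) fg.inv_solve_left[OF _ assms(3)] assms(2) by metis
  then show ?thesis using h(1) by simp
qed

lemma cyc_red_rev: "cyclically_reduced w \<Longrightarrow> cyclically_reduced (rev w)"
proof -
  assume a: "cyclically_reduced w"
  have "last w \<noteq> inv_letter (hd w)" if ne: "w \<noteq> []"
  proof
    assume eq: "last w = inv_letter (hd w)"
    then have "hd w = inv_letter (last w)" by simp
    with a ne show False by (simp add: cyclically_reduced_def)
  qed
  then show ?thesis using a by (simp add: cyclically_reduced_def reduced_rev hd_rev last_rev)
qed

lemma cyc_rot:
  assumes "cyclically_reduced (w1 @ w2)"
  shows "cyclically_reduced (w2 @ w1)"
proof (cases "w1 = [] \<or> w2 = []")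
  case True then show ?thesis using assms by auto
next
  case False
  then show ?thesis using assms
    by (auto simp: cyclically_reduced_def reduced_append)
qed


lemma core_mem:
  assumes H: "subgroup H (free_group k)" and y: "y \<in> carrier (free_group k)"
    and z: "z \<in> carrier (free_group k)" "z \<noteq> []" "cyclically_reduced z"
    and c: "inv\<^bsub>free_group k\<^esub> y \<otimes>\<^bsub>free_group k\<^esub> (z \<otimes>\<^bsub>free_group k\<^esub> y) \<in> H"
  shows "y <#\<^bsub>free_group k\<^esub> H \<in> core_vertices k H"
proof -
  let ?v = "y <#\<^bsub>free_group k\<^esub> H"
  have Hc: "H \<subseteq> carrier (free_group k)" using subgroup.subset[OF H] .
  have vc: "?v \<subseteq> carrier (free_group k)" using fg.l_coset_subset_G[OF Hc y] .
  have zl: "\<forall>x\<in>set (rev z). fst x < k" using z(1) by (simp add: fg_carrier)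
  have rz: "red z = z" using z(1) by (simp add: fg_carrier red_id)
  have "last (walk_verts k ?v (rev z)) = z <#\<^bsub>free_group k\<^esub> ?v"
    using walk_last[OF vc zl] rz by simp
  also have "\<dots> = (z \<otimes>\<^bsub>free_group k\<^esub> y) <#\<^bsub>free_group k\<^esub> H"
    using fg.lcos_m_assoc[OF Hc z(1) y] .
  also have "\<dots> = ?v"
    using lcos_eq[OF H _ y c] z(1) y by simp
  finally have "last (walk_verts k ?v (rev z)) = ?v" .
  moreover have "?v \<in> schreier_vertices k H" unfolding schreier_vertices_def using y by blast
  moreover have "rev z \<noteq> []" using z(2) by simp
  moreover have "cyclically_reduced (rev z)" using cyc_red_rev[OF z(3)] .
  ultimately have "schreier_cycle k H ?v (rev z)"
    unfolding schreier_cycle_def using zl by blast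
  moreover have "?v \<in> set (walk_verts k ?v (rev z))" by (rule start_in_walk)
  ultimately show ?thesis unfolding core_vertices_def by blast
qed

lemma core_char:
  assumes H: "subgroup H (free_group k)" and u: "u \<in> core_vertices k H"
  shows "\<exists>y z. y \<in> carrier (free_group k) \<and> u = y <#\<^bsub>free_group k\<^esub> H \<and>
     z \<in> carrier (free_group k) \<and> z \<noteq> [] \<and> cyclically_reduced z \<and> z <#\<^bsub>free_group k\<^esub> u = u"
proof -
  have Hc: "H \<subseteq> carrier (free_group k)" using subgroup.subset[OF H] .
  obtain v w where cyc: "schreier_cycle k H v w" and uw: "u \<in> set (walk_verts k v w)"
    using u unfolding core_vertices_def by blast
  obtain y0 where y0: "y0 \<in> carrier (free_group k)" "v = y0 <#\<^bsub>free_group k\<^esub> H"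
    using cyc unfolding schreier_cycle_def schreier_vertices_def by blast
  have vc: "v \<subseteq> carrier (free_group k)" using fg.l_coset_subset_G[OF Hc y0(1)] y0(2) by simp
  have wl: "\<forall>x\<in>set w. fst x < k" and wne: "w \<noteq> []" and wc: "cyclically_reduced w"
    and wcl: "last (walk_verts k v w) = v"
    using cyc by (auto simp: schreier_cycle_def)
  obtain w1 w2 where w: "w = w1 @ w2" and u1: "u = last (walk_verts k v w1)"
    using walk_set[OF uw] by blast
  let ?e1 = "red (rev w1)" and ?e2 = "red (rev w2)"
  have w1l: "\<forall>x\<in>set w1. fst x < k" and w2l: "\<forall>x\<in>set w2. fst x < k" using wl w by auto
  have e1: "?e1 \<in> carrier (free_group k)" and e2: "?e2 \<in> carrier (free_group k)"
    using w1l w2l by (simp_all add: red_carrier)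
  have u2: "u = ?e1 <#\<^bsub>free_group k\<^esub> v" using u1 walk_last[OF vc w1l] by simp
  have vv: "(?e2 \<otimes>\<^bsub>free_group k\<^esub> ?e1) <#\<^bsub>free_group k\<^esub> v = v"
    using wcl walk_last[OF vc wl] w by (simp add: fg_mult)
  let ?z = "rev (w2 @ w1)"
  have zc: "cyclically_reduced ?z" using cyc_red_rev[OF cyc_rot[of w1 w2]] wc w by blast
  have zcar: "?z \<in> carrier (free_group k)"
  proof -
    have "reduced ?z" using zc by (simp add: cyclically_reduced_def)
    moreover have "\<forall>x\<in>set ?z. fst x < k" using w1l w2l by auto
    ultimately show ?thesis by (simp add: fg_carrier)
  qed
  have zeq: "?z = ?e1 \<otimes>\<^bsub>free_group k\<^esub> ?e2"
  proof -
    have "red ?z = ?z" using zcar by (simp add: fg_carrier red_id)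
    moreover have "?e1 \<otimes>\<^bsub>free_group k\<^esub> ?e2 = red ?z" by (simp add: fg_mult)
    ultimately show ?thesis by simp
  qed
  have "?z <#\<^bsub>free_group k\<^esub> u = ?e1 <#\<^bsub>free_group k\<^esub> (?e2 <#\<^bsub>free_group k\<^esub> (?e1 <#\<^bsub>free_group k\<^esub> v))"
    using u2 zeq fg.lcos_m_assoc[OF _ e1 e2] fg.l_coset_subset_G[OF vc e1] by simp
  also have "\<dots> = ?e1 <#\<^bsub>free_group k\<^esub> v"
    using fg.lcos_m_assoc[OF vc e2 e1] vv by simp
  finally have zu: "?z <#\<^bsub>free_group k\<^esub> u = u" using u2 by simp
  have uy: "u = (?e1 \<otimes>\<^bsub>free_group k\<^esub> y0) <#\<^bsub>free_group k\<^esub> H"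
    using u2 y0 fg.lcos_m_assoc[OF Hc e1 y0(1)] by simp
  have zne: "?z \<noteq> []" using wne w by simp
  have yc: "?e1 \<otimes>\<^bsub>free_group k\<^esub> y0 \<in> carrier (free_group k)" by (rule fg.m_closed[OF e1 y0(1)])
  show ?thesis
  proof (intro exI conjI)
    show "?e1 \<otimes>\<^bsub>free_group k\<^esub> y0 \<in> carrier (free_group k)" by (rule yc)
    show "u = (?e1 \<otimes>\<^bsub>free_group k\<^esub> y0) <#\<^bsub>free_group k\<^esub> H" by (rule uy)
    show "?z \<in> carrier (free_group k)" by (rule zcar)
    show "?z \<noteq> []" by (rule zne)
    show "cyclically_reduced ?z" by (rule zc)
    show "?z <#\<^bsub>free_group k\<^esub> u = u" by (rule zu)
  qed
qed

definition sfx :: "letter list \<Rightarrow> letter list set" where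
  "sfx w = {s. \<exists>q. w = q @ s}"

lemma finite_sfx: "finite (sfx w)"
proof -
  have "sfx w \<subseteq> (\<lambda>i. drop i w) ` {..length w}"
  proof
    fix s assume "s \<in> sfx w"
    then obtain q where "w = q @ s" by (auto simp: sfx_def)
    then have "s = drop (length q) w" "length q \<in> {..length w}" by auto
    then show "s \<in> (\<lambda>i. drop i w) ` {..length w}" by blast
  qed
  then show ?thesis by (rule finite_subset) simp
qed

lemma sfx_carrier: "w \<in> carrier (free_group k) \<Longrightarrow> s \<in> sfx w \<Longrightarrow> s \<in> carrier (free_group k)"
  by (auto simp: sfx_def dest: append_carrier)

lemma lcos_mem_self:
  assumes "subgroup H (free_group k)" "h \<in> H"
  shows "h <#\<^bsub>free_group k\<^esub> H = H"
proof -
  have hc: "h \<in> carrier (free_group k)" using subgroup.mem_carrier[OF assms] .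
  have Hc: "H \<subseteq> carrier (free_group k)" using subgroup.subset[OF assms(1)] .
  have "h <#\<^bsub>free_group k\<^esub> H = \<one>\<^bsub>free_group k\<^esub> <#\<^bsub>free_group k\<^esub> H"
    using assms(2) hc by (intro lcos_eq[OF assms(1)]) simp_all
  then show ?thesis using fg.lcos_mult_one[OF Hc] by simp
qed

lemma one_lcos: "subgroup H (free_group k) \<Longrightarrow> [] <#\<^bsub>free_group k\<^esub> H = H"
  using lcos_mem_self[of H k "[]"] subgroup.one_closed[of H "free_group k"] by (simp add: fg_one)

lemma genA:
  assumes S: "S \<subseteq> carrier (free_group k)" and H: "H = generate (free_group k) S"
    and g: "g \<in> generate (free_group k) S"
  shows "\<forall>s\<in>sfx g. s <#\<^bsub>free_group k\<^esub> H \<in>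
     insert H ((\<lambda>s. s <#\<^bsub>free_group k\<^esub> H) ` (\<Union>t\<in>S. sfx t \<union> sfx (inv_w t)))"
  using g
proof (induction g rule: generate.induct)
  case one
  have "subgroup H (free_group k)" using H fg.generate_is_subgroup[OF S] by simp
  then show ?case by (auto simp: fg_one sfx_def one_lcos)
next
  case (incl h) then show ?case by blast
next
  case (inv h)
  then have "inv\<^bsub>free_group k\<^esub> h = inv_w h" using S fg_inv by blast
  then show ?case using inv by auto
next
  case (eng h1 h2)
  have Hs: "subgroup H (free_group k)" using H fg.generate_is_subgroup[OF S] by simp
  have c1: "h1 \<in> carrier (free_group k)" and c2: "h2 \<in> carrier (free_group k)"
    using eng.hyps fg.generate_in_carrier[OF S] by blast+
  have r2: "red h2 = h2" using c2 by (simp add: fg_carrier red_id)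
  have e: "h1 \<otimes>\<^bsub>free_group k\<^esub> h2 = F h1 h2" using r2 by (simp add: fg_mult red_append_F)
  show ?case
  proof
    fix s assume "s \<in> sfx (h1 \<otimes>\<^bsub>free_group k\<^esub> h2)"
    then obtain q where q: "F h1 h2 = q @ s" using e by (auto simp: sfx_def)
    from suffix_F[OF q] show "s <#\<^bsub>free_group k\<^esub> H \<in>
     insert H ((\<lambda>s. s <#\<^bsub>free_group k\<^esub> H) ` (\<Union>t\<in>S. sfx t \<union> sfx (inv_w t)))"
    proof
      assume "\<exists>q'. h2 = q' @ s"
      then show ?thesis using eng.IH(2) by (auto simp: sfx_def)
    next
      assume "\<exists>s1 q1. h1 = q1 @ s1 \<and> s = F s1 h2"
      then obtain s1 q1 where s1: "h1 = q1 @ s1" "s = F s1 h2" by blast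
      have s1c: "s1 \<in> carrier (free_group k)" using c1 s1(1) append_carrier by blast
      have "s = s1 \<otimes>\<^bsub>free_group k\<^esub> h2" using s1(2) r2 by (simp add: fg_mult red_append_F)
      then have "s <#\<^bsub>free_group k\<^esub> H = s1 <#\<^bsub>free_group k\<^esub> (h2 <#\<^bsub>free_group k\<^esub> H)"
        using fg.lcos_m_assoc[OF _ s1c c2, of H] Hs subgroup.subset by metis
      also have "\<dots> = s1 <#\<^bsub>free_group k\<^esub> H"
        using lcos_mem_self[OF Hs] eng.hyps(2) H by simp
      finally show ?thesis using eng.IH(1) s1(1) by (auto simp: sfx_def)
    qed
  qed
qed

lemma claimB:
  assumes H: "subgroup H (free_group k)" and y: "y \<in> carrier (free_group k)"
    and u: "u = y <#\<^bsub>free_group k\<^esub> H" and mini: "\<forall>y'\<in>u. length y \<le> length y'"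
    and z: "z \<in> carrier (free_group k)" "z \<noteq> []"
    and zu: "z <#\<^bsub>free_group k\<^esub> u = u" and zu': "inv_w z <#\<^bsub>free_group k\<^esub> u = u"
    and red: "reduced (z @ y)"
  shows "\<exists>r\<in>H. y \<in> sfx r"
proof -
  have Hc: "H \<subseteq> carrier (free_group k)" using subgroup.subset[OF H] .
  have yr: "reduced y" and zr: "reduced z" using y z by (auto simp: fg_carrier)
  have zy: "z \<otimes>\<^bsub>free_group k\<^esub> y = z @ y" using red by (simp add: fg_mult red_id)
  have zyc: "z @ y \<in> carrier (free_group k)" using zy fg.m_closed[OF z(1) y] by simp
  have "(z \<otimes>\<^bsub>free_group k\<^esub> y) <#\<^bsub>free_group k\<^esub> H = y <#\<^bsub>free_group k\<^esub> H"
    using zu u fg.lcos_m_assoc[OF Hc z(1) y] by simp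
  then have rH: "inv\<^bsub>free_group k\<^esub> y \<otimes>\<^bsub>free_group k\<^esub> (z \<otimes>\<^bsub>free_group k\<^esub> y) \<in> H"
    using lcos_eqD[OF H fg.m_closed[OF z(1) y] y] by simp
  have rdef: "inv\<^bsub>free_group k\<^esub> y \<otimes>\<^bsub>free_group k\<^esub> (z \<otimes>\<^bsub>free_group k\<^esub> y) = red (inv_w y @ z @ y)"
    using y zy by (simp add: fg_inv fg_mult)
  obtain a b c where abc: "inv_w y = a @ b" "z @ y = inv_w b @ c" "red (inv_w y @ z @ y) = a @ c"
    using cancel_struct[of "inv_w y" "z @ y"] yr red by auto
  have yp: "y = inv_w b @ inv_w a" using arg_cong[OF abc(1), of inv_w] by simp
  show ?thesis
  proof (cases "length z \<le> length (inv_w b)")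
    case True
    then obtain p' where p': "inv_w b = z @ p'" using abc(2)
      by (metis append_eq_append_conv_if append_take_drop_id)
    let ?y2 = "p' @ inv_w a"
    have y2: "y = z @ ?y2" using yp p' by simp
    have y2r: "reduced ?y2" using yr y2 by (simp add: reduced_append)
    have "inv_w z \<otimes>\<^bsub>free_group k\<^esub> y = ?y2"
    proof -
      have "inv_w z \<otimes>\<^bsub>free_group k\<^esub> y = red ((inv_w z @ z) @ ?y2)" using y2 by (simp add: fg_mult)
      also have "\<dots> = red (red (inv_w z @ z) @ ?y2)" by (rule red_append_left[symmetric])
      also have "\<dots> = ?y2" using y2r by (simp add: red_inv_cancel red_id)
      finally show ?thesis .
    qed
    moreover have "inv_w z \<otimes>\<^bsub>free_group k\<^esub> y \<in> u"
    proof -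
      have "y \<in> u" using u y subgroup.one_closed[OF H] unfolding l_coset_def
        by (force simp: fg_one fg_mult red_id fg_carrier)
      then show ?thesis using zu' unfolding l_coset_def by blast
    qed
    ultimately have "length y \<le> length ?y2" using mini by metis
    then show ?thesis using y2 z(2) by simp
  next
    case False
    then obtain d where "z = inv_w b @ d" using abc(2)
      by (metis append_eq_append_conv_if append_take_drop_id le_cases)
    then have "c = d @ y" using abc(2) by simp
    then have "y \<in> sfx (red (inv_w y @ z @ y))" using abc(3) by (auto simp: sfx_def)
    then show ?thesis using rH rdef by metis
  qed
qed

lemma (in group) cancel_in:
  "a \<in> carrier G \<Longrightarrow> y \<in> carrier G \<Longrightarrow> a \<otimes> (inv a \<otimes> y) = y"
  by (simp add: m_assoc[symmetric])

lemma (in group) conj_pow: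
  assumes a: "a \<in> carrier G" and x: "x \<in> carrier G"
  shows "(inv a \<otimes> x \<otimes> a) [^] (n::nat) = inv a \<otimes> x [^] n \<otimes> a"
proof (induction n)
  case 0 then show ?case using a by simp
next
  case (Suc n)
  have "(inv a \<otimes> x \<otimes> a) [^] Suc n = (inv a \<otimes> x [^] n \<otimes> a) \<otimes> (inv a \<otimes> x \<otimes> a)"
    using Suc by (simp add: nat_pow_Suc)
  also have "\<dots> = inv a \<otimes> (x [^] n \<otimes> x) \<otimes> a"
    using a x by (simp add: m_assoc cancel_in)
  also have "\<dots> = inv a \<otimes> x [^] Suc n \<otimes> a"
    using a x by (simp add: nat_pow_Suc)
  finally show ?case .
qed

lemma concat_rep_snoc: "concat (replicate n c) @ c = c @ concat (replicate n c)"
  by (induction n) auto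

lemma pow_word:
  assumes c: "c \<in> carrier (free_group k)" "cyclically_reduced c" "c \<noteq> []"
  shows "c [^]\<^bsub>free_group k\<^esub> (n::nat) = concat (replicate n c)"
proof (induction n)
  case 0 then show ?case by (simp add: fg_one)
next
  case (Suc n)
  have "c [^]\<^bsub>free_group k\<^esub> Suc n = red (concat (replicate n c) @ c)"
    using Suc by (simp add: fg_mult)
  also have "\<dots> = concat (replicate (Suc n) c)"
  proof -
    have r: "reduced (concat (replicate (Suc n) c))" using cyc_red_pow[OF c(2,3), of "Suc n"] by blast
    have "concat (replicate n c) @ c = concat (replicate (Suc n) c)" by (simp add: concat_rep_snoc)
    then show ?thesis using red_id[OF r] by simp
  qed
  finally show ?case .
qed

lemma sub_pow:
  assumes H: "subgroup H (free_group k)" and x: "x \<in> H"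
  shows "x [^]\<^bsub>free_group k\<^esub> (n::nat) \<in> H"
proof (induction n)
  case 0 then show ?case using subgroup.one_closed[OF H] by simp
next
  case (Suc n) then show ?case using subgroup.m_closed[OF H Suc x] by (simp add: fg.nat_pow_Suc)
qed

lemma rcosets_sub:
  "rcosets\<^bsub>(free_group k)\<lparr>carrier := H1\<rparr>\<^esub> G = {G #>\<^bsub>free_group k\<^esub> h | h. h \<in> H1}"
  by (auto simp: RCOSETS_def)

lemma rcos_eq_imp:
  assumes G: "subgroup G (free_group k)" and a: "a \<in> carrier (free_group k)" and b: "b \<in> carrier (free_group k)"
    and e: "G #>\<^bsub>free_group k\<^esub> a = G #>\<^bsub>free_group k\<^esub> b"
  shows "b \<otimes>\<^bsub>free_group k\<^esub> inv\<^bsub>free_group k\<^esub> a \<in> G"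
proof -
  have "b \<in> G #>\<^bsub>free_group k\<^esub> a" using fg.repr_independenceD[OF G b e] .
  then show ?thesis using subgroup.rcos_module_imp[OF G group_fg a] by blast
qed

lemma pigeon_pow:
  assumes G: "subgroup G (free_group k)" and H1: "subgroup H1 (free_group k)"
    and fin: "finite {G #>\<^bsub>free_group k\<^esub> h | h. h \<in> H1}"
    and x: "x \<in> H1"
  shows "x [^]\<^bsub>free_group k\<^esub> (fact (card {G #>\<^bsub>free_group k\<^esub> h | h. h \<in> H1}) :: nat) \<in> G"
proof -
  let ?RG = "{G #>\<^bsub>free_group k\<^esub> h | h. h \<in> H1}"
  let ?n = "card ?RG"
  let ?f = "\<lambda>i::nat. G #>\<^bsub>free_group k\<^esub> (x [^]\<^bsub>free_group k\<^esub> i)"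
  have xc: "x \<in> carrier (free_group k)" using subgroup.mem_carrier[OF H1 x] .
  have "?f ` {0..?n} \<subseteq> ?RG"
  proof
    fix R assume "R \<in> ?f ` {0..?n}"
    then obtain i where "R = ?f i" by blast
    moreover have "x [^]\<^bsub>free_group k\<^esub> i \<in> H1"
      using sub_pow[OF H1 x] .
    ultimately show "R \<in> ?RG" by blast
  qed
  moreover have "\<not> card {0..?n} \<le> ?n" by simp
  ultimately have "\<not> inj_on ?f {0..?n}" using card_inj_on_le[OF _ _ fin] by blast
  then obtain i j where ij: "i \<in> {0..?n}" "j \<in> {0..?n}" "i \<noteq> j" "?f i = ?f j"
    unfolding inj_on_def by blast
  have "\<exists>i j. i < j \<and> j \<le> ?n \<and> ?f i = ?f j"
  proof (cases "i < j")
    case True then show ?thesis using ij by auto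
  next
    case False then show ?thesis using ij by (intro exI[of _ j] exI[of _ i]) auto
  qed
  then obtain i j where ij: "i < j" "j \<le> ?n" "?f i = ?f j" by blast
  have xi: "x [^]\<^bsub>free_group k\<^esub> i \<in> carrier (free_group k)" using xc by simp
  have xj: "x [^]\<^bsub>free_group k\<^esub> j \<in> carrier (free_group k)" using xc by simp
  have m: "x [^]\<^bsub>free_group k\<^esub> j \<otimes>\<^bsub>free_group k\<^esub> inv\<^bsub>free_group k\<^esub> (x [^]\<^bsub>free_group k\<^esub> i) \<in> G"
    using rcos_eq_imp[OF G xi xj ij(3)] .
  have "x [^]\<^bsub>free_group k\<^esub> j = x [^]\<^bsub>free_group k\<^esub> (j - i) \<otimes>\<^bsub>free_group k\<^esub> x [^]\<^bsub>free_group k\<^esub> i"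
    using ij(1) xc by (simp add: fg.nat_pow_mult)
  then have "x [^]\<^bsub>free_group k\<^esub> j \<otimes>\<^bsub>free_group k\<^esub> inv\<^bsub>free_group k\<^esub> (x [^]\<^bsub>free_group k\<^esub> i) = x [^]\<^bsub>free_group k\<^esub> (j - i)"
    using xc by (simp add: fg.m_assoc)
  then have d: "x [^]\<^bsub>free_group k\<^esub> (j - i) \<in> G" using m by simp
  have "(j - i) dvd fact ?n" using ij by (intro dvd_fact) auto
  then obtain q where q: "(fact ?n :: nat) = (j - i) * q" by blast
  have "x [^]\<^bsub>free_group k\<^esub> (fact ?n :: nat) = (x [^]\<^bsub>free_group k\<^esub> (j - i)) [^]\<^bsub>free_group k\<^esub> q"
    unfolding q using fg.nat_pow_pow[OF xc] by simp
  also have "\<dots> \<in> G"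
    using sub_pow[OF G d] .
  finally show ?thesis .
qed

lemma tower:
  assumes H1: "subgroup H1 (free_group k)" and H2: "subgroup H2 (free_group k)"
    and G: "subgroup G (free_group k)" and GH: "G \<subseteq> H1" "G \<subseteq> H2"
    and fin: "finite {G #>\<^bsub>free_group k\<^esub> h | h. h \<in> H1}"
  shows "finite {h <#\<^bsub>free_group k\<^esub> H2 | h. h \<in> H1} \<and>
     card {h <#\<^bsub>free_group k\<^esub> H2 | h. h \<in> H1} dvd card {G #>\<^bsub>free_group k\<^esub> h | h. h \<in> H1}"
proof -
  let ?FG = "free_group k"
  let ?RG = "{G #>\<^bsub>?FG\<^esub> h | h. h \<in> H1}"
  let ?O = "{h <#\<^bsub>?FG\<^esub> H2 | h. h \<in> H1}"
  define Fib where "Fib oo = {R \<in> ?RG. \<exists>h\<in>H1. R = G #>\<^bsub>?FG\<^esub> h \<and> oo = inv\<^bsub>?FG\<^esub> h <#\<^bsub>?FG\<^esub> H2}" for oo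
  have H1c: "\<And>h. h \<in> H1 \<Longrightarrow> h \<in> carrier ?FG" using subgroup.mem_carrier[OF H1] .
  have Gc: "G \<subseteq> carrier ?FG" using subgroup.subset[OF G] .
  have H2c: "H2 \<subseteq> carrier ?FG" using subgroup.subset[OF H2] .
  have key: "inv\<^bsub>?FG\<^esub> h1 <#\<^bsub>?FG\<^esub> H2 = inv\<^bsub>?FG\<^esub> h2 <#\<^bsub>?FG\<^esub> H2"
    if h: "h1 \<in> H1" "h2 \<in> H1" "G #>\<^bsub>?FG\<^esub> h1 = G #>\<^bsub>?FG\<^esub> h2" for h1 h2
  proof -
    have "h2 \<otimes>\<^bsub>?FG\<^esub> inv\<^bsub>?FG\<^esub> h1 \<in> G" using rcos_eq_imp[OF G H1c[OF h(1)] H1c[OF h(2)] h(3)] .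
    then have "inv\<^bsub>?FG\<^esub> (inv\<^bsub>?FG\<^esub> h2) \<otimes>\<^bsub>?FG\<^esub> inv\<^bsub>?FG\<^esub> h1 \<in> H2"
      using GH(2) H1c[OF h(2)] by auto
    then show ?thesis using lcos_eq[OF H2] H1c h by simp
  qed
  have invH1: "\<And>h. h \<in> H1 \<Longrightarrow> inv\<^bsub>?FG\<^esub> h \<in> H1" using subgroup.m_inv_closed[OF H1] .
  have cover: "?RG = (\<Union>oo\<in>?O. Fib oo)"
  proof
    show "?RG \<subseteq> (\<Union>oo\<in>?O. Fib oo)"
    proof
      fix R assume "R \<in> ?RG"
      then obtain h where h: "h \<in> H1" "R = G #>\<^bsub>?FG\<^esub> h" by blast
      then have "R \<in> Fib (inv\<^bsub>?FG\<^esub> h <#\<^bsub>?FG\<^esub> H2)" unfolding Fib_def by blast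
      moreover have "inv\<^bsub>?FG\<^esub> h <#\<^bsub>?FG\<^esub> H2 \<in> ?O" using invH1[OF h(1)] by blast
      ultimately show "R \<in> (\<Union>oo\<in>?O. Fib oo)" by blast
    qed
  qed (auto simp: Fib_def)
  have disj: "Fib o1 \<inter> Fib o2 = {}" if "o1 \<noteq> o2" for o1 o2
  proof (rule ccontr)
    assume "Fib o1 \<inter> Fib o2 \<noteq> {}"
    then obtain R h1 h2 where "h1 \<in> H1" "h2 \<in> H1" "R = G #>\<^bsub>?FG\<^esub> h1" "R = G #>\<^bsub>?FG\<^esub> h2"
      "o1 = inv\<^bsub>?FG\<^esub> h1 <#\<^bsub>?FG\<^esub> H2" "o2 = inv\<^bsub>?FG\<^esub> h2 <#\<^bsub>?FG\<^esub> H2"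
      unfolding Fib_def by blast
    then show False using key that by metis
  qed
  have Fsub: "Fib oo \<subseteq> ?RG" for oo unfolding Fib_def by blast
  have Fne: "Fib oo \<noteq> {}" if ooO: "oo \<in> ?O" for oo
  proof -
    obtain h where h: "h \<in> H1" "oo = h <#\<^bsub>?FG\<^esub> H2" using ooO by blast
    have "G #>\<^bsub>?FG\<^esub> inv\<^bsub>?FG\<^esub> h \<in> Fib oo"
      unfolding Fib_def using h invH1[OF h(1)] H1c[OF h(1)] by force
    then show ?thesis by blast
  qed
  have finO: "finite ?O"
  proof (rule finite_imageD)
    have "Fib ` ?O \<subseteq> Pow ?RG" using Fsub by blast
    then show "finite (Fib ` ?O)" using fin by (meson finite_Pow_iff finite_subset)
    show "inj_on Fib ?O"
    proof (rule inj_onI)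
      fix o1 o2 assume oo: "o1 \<in> ?O" "o2 \<in> ?O" "Fib o1 = Fib o2"
      show "o1 = o2"
      proof (rule ccontr)
        assume "o1 \<noteq> o2"
        then have "Fib o1 \<inter> Fib o2 = {}" by (rule disj)
        with oo(3) have "Fib o1 = {}" by simp
        with Fne[OF oo(1)] show False by simp
      qed
    qed
  qed
  have cardF: "card (Fib oo) = card (Fib H2)" if ooO: "oo \<in> ?O" for oo
  proof -
    obtain h where h: "h \<in> H1" "oo = h <#\<^bsub>?FG\<^esub> H2" using ooO by blast
    let ?h0 = "inv\<^bsub>?FG\<^esub> h"
    have h0: "?h0 \<in> H1" "?h0 \<in> carrier ?FG" using invH1[OF h(1)] H1c[OF invH1[OF h(1)]] by auto
    have hc: "h \<in> carrier ?FG" using H1c[OF h(1)] .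
    have img: "(\<lambda>R. R #>\<^bsub>?FG\<^esub> ?h0) ` Fib H2 = Fib oo"
    proof
      show "(\<lambda>R. R #>\<^bsub>?FG\<^esub> ?h0) ` Fib H2 \<subseteq> Fib oo"
      proof
        fix R' assume "R' \<in> (\<lambda>R. R #>\<^bsub>?FG\<^esub> ?h0) ` Fib H2"
        then obtain R g where g: "R' = R #>\<^bsub>?FG\<^esub> ?h0" "g \<in> H1" "R = G #>\<^bsub>?FG\<^esub> g"
          "H2 = inv\<^bsub>?FG\<^esub> g <#\<^bsub>?FG\<^esub> H2"
          unfolding Fib_def by blast
        have gc: "g \<in> carrier ?FG" using H1c[OF g(2)] .
        have R': "R' = G #>\<^bsub>?FG\<^esub> (g \<otimes>\<^bsub>?FG\<^esub> ?h0)"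
          using g(1,3) fg.coset_mult_assoc[OF Gc gc h0(2)] by simp
        have gh: "g \<otimes>\<^bsub>?FG\<^esub> ?h0 \<in> H1" using subgroup.m_closed[OF H1 g(2) h0(1)] .
        have "inv\<^bsub>?FG\<^esub> (g \<otimes>\<^bsub>?FG\<^esub> ?h0) <#\<^bsub>?FG\<^esub> H2 = h <#\<^bsub>?FG\<^esub> (inv\<^bsub>?FG\<^esub> g <#\<^bsub>?FG\<^esub> H2)"
          using fg.lcos_m_assoc[OF H2c hc fg.inv_closed[OF gc]] gc hc
          by (simp add: fg.inv_mult_group)
        also have "\<dots> = oo" using g(4) h(2) by simp
        finally show "R' \<in> Fib oo" unfolding Fib_def using R' gh by blast
      qed
    next
      show "Fib oo \<subseteq> (\<lambda>R. R #>\<^bsub>?FG\<^esub> ?h0) ` Fib H2"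
      proof
        fix R' assume "R' \<in> Fib oo"
        then obtain h' where h': "h' \<in> H1" "R' = G #>\<^bsub>?FG\<^esub> h'" "oo = inv\<^bsub>?FG\<^esub> h' <#\<^bsub>?FG\<^esub> H2"
          unfolding Fib_def by blast
        have h'c: "h' \<in> carrier ?FG" using H1c[OF h'(1)] .
        let ?g = "h' \<otimes>\<^bsub>?FG\<^esub> h"
        have g: "?g \<in> H1" using subgroup.m_closed[OF H1 h'(1) h(1)] .
        have gc: "?g \<in> carrier ?FG" using h'c hc by simp
        have "inv\<^bsub>?FG\<^esub> ?g <#\<^bsub>?FG\<^esub> H2 = ?h0 <#\<^bsub>?FG\<^esub> (inv\<^bsub>?FG\<^esub> h' <#\<^bsub>?FG\<^esub> H2)"
          using fg.lcos_m_assoc[OF H2c h0(2) fg.inv_closed[OF h'c]] h'c hc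
          by (simp add: fg.inv_mult_group)
        also have "\<dots> = ?h0 <#\<^bsub>?FG\<^esub> (h <#\<^bsub>?FG\<^esub> H2)" using h'(3) h(2) by simp
        also have "\<dots> = H2" using fg.lcos_m_assoc[OF H2c h0(2) hc] hc fg.lcos_mult_one[OF H2c] by simp
        finally have "G #>\<^bsub>?FG\<^esub> ?g \<in> Fib H2" unfolding Fib_def using g by blast
        moreover have "(G #>\<^bsub>?FG\<^esub> ?g) #>\<^bsub>?FG\<^esub> ?h0 = R'"
          using fg.coset_mult_assoc[OF Gc gc h0(2)] h'(2) h'c hc by (simp add: fg.m_assoc)
        ultimately show "R' \<in> (\<lambda>R. R #>\<^bsub>?FG\<^esub> ?h0) ` Fib H2" by blast
      qed
    qed
    have inj: "inj_on (\<lambda>R. R #>\<^bsub>?FG\<^esub> ?h0) (Fib H2)"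
    proof (rule inj_onI)
      fix R1 R2 assume R: "R1 \<in> Fib H2" "R2 \<in> Fib H2" "R1 #>\<^bsub>?FG\<^esub> ?h0 = R2 #>\<^bsub>?FG\<^esub> ?h0"
      have sub: "R \<subseteq> carrier ?FG" if "R \<in> Fib H2" for R
        using that unfolding Fib_def using fg.r_coset_subset_G[OF Gc] H1c by blast
      have "R1 = (R1 #>\<^bsub>?FG\<^esub> ?h0) #>\<^bsub>?FG\<^esub> h"
        using fg.coset_mult_assoc[OF sub[OF R(1)] h0(2) hc] hc sub[OF R(1)] by simp
      also have "\<dots> = (R2 #>\<^bsub>?FG\<^esub> ?h0) #>\<^bsub>?FG\<^esub> h" using R(3) by simp
      also have "\<dots> = R2"
        using fg.coset_mult_assoc[OF sub[OF R(2)] h0(2) hc] hc sub[OF R(2)] by simp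
      finally show "R1 = R2" .
    qed
    show ?thesis using card_image[OF inj] img by simp
  qed
  have "card ?RG = (\<Sum>oo\<in>?O. card (Fib oo))"
    unfolding cover
    by (rule card_UN_disjoint[OF finO]) (use Fsub fin disj in \<open>auto intro: finite_subset\<close>)
  also have "\<dots> = card ?O * card (Fib H2)" using cardF by simp
  finally show ?thesis using finO by simp
qed

lemma core_finite:
  assumes S: "finite S" "S \<subseteq> carrier (free_group k)" and H: "H = generate (free_group k) S"
  shows "finite (core_vertices k H)"
proof -
  let ?FG = "free_group k"
  let ?T = "insert H ((\<lambda>s. s <#\<^bsub>?FG\<^esub> H) ` (\<Union>t\<in>S. sfx t \<union> sfx (inv_w t)))"
  have Hs: "subgroup H ?FG" using H fg.generate_is_subgroup[OF S(2)] by simp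
  have Hc: "H \<subseteq> carrier ?FG" using subgroup.subset[OF Hs] .
  have finT: "finite ?T" using S(1) by (simp add: finite_sfx)
  have "core_vertices k H \<subseteq> ?T"
  proof
    fix u assume u: "u \<in> core_vertices k H"
    obtain y0 z where y0: "y0 \<in> carrier ?FG" "u = y0 <#\<^bsub>?FG\<^esub> H"
      and z: "z \<in> carrier ?FG" "z \<noteq> []" "cyclically_reduced z" "z <#\<^bsub>?FG\<^esub> u = u"
      using core_char[OF Hs u] by blast
    have uc: "u \<subseteq> carrier ?FG" using fg.l_coset_subset_G[OF Hc y0(1)] y0(2) by simp
    have y0u: "y0 \<in> u"
    proof -
      have "inv\<^bsub>?FG\<^esub> y0 \<otimes>\<^bsub>?FG\<^esub> y0 \<in> H" using y0(1) subgroup.one_closed[OF Hs] by simp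
      then show ?thesis using subgroup.lcos_module_rev[OF Hs group_fg y0(1) y0(1)] y0(2) by simp
    qed
    obtain y where y: "y \<in> u" and mini: "\<forall>y'\<in>u. length y \<le> length y'"
      using ex_has_least_nat[of "\<lambda>y. y \<in> u" y0 length] y0u by blast
    have yc: "y \<in> carrier ?FG" using y uc by blast
    have uy: "u = y <#\<^bsub>?FG\<^esub> H" using fg.l_repr_independence[OF _ y0(1) Hs] y y0(2) by simp
    have izc: "inv_w z \<in> carrier ?FG" using inv_w_carrier[OF z(1)] .
    have zu': "inv_w z <#\<^bsub>?FG\<^esub> u = u"
    proof -
      have "inv_w z <#\<^bsub>?FG\<^esub> u = inv_w z <#\<^bsub>?FG\<^esub> (z <#\<^bsub>?FG\<^esub> u)" using z(4) by simp
      also have "\<dots> = (inv_w z \<otimes>\<^bsub>?FG\<^esub> z) <#\<^bsub>?FG\<^esub> u" using fg.lcos_m_assoc[OF uc izc z(1)] .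
      also have "inv_w z \<otimes>\<^bsub>?FG\<^esub> z = \<one>\<^bsub>?FG\<^esub>" by (simp add: fg_mult fg_one red_inv_cancel)
      finally show ?thesis using fg.lcos_mult_one[OF uc] by simp
    qed
    have zr: "reduced z" "hd z \<noteq> inv_letter (last z)" using z by (auto simp: fg_carrier cyclically_reduced_def)
    have yr: "reduced y" using yc by (simp add: fg_carrier)
    have "\<exists>r\<in>H. y \<in> sfx r"
    proof (cases "y = [] \<or> hd y \<noteq> inv_letter (last z)")
      case True
      then have "reduced (z @ y)" using zr yr z(2) by (auto simp: reduced_append)
      then show ?thesis using claimB[OF Hs yc uy mini z(1,2) z(4) zu'] by blast
    next
      case False
      then have hy: "hd y = inv_letter (last z)" "y \<noteq> []" by auto
      have "last (inv_w z) = inv_letter (hd z)" using z(2) by (simp add: inv_w_def last_rev hd_map)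
      then have "hd y \<noteq> inv_letter (last (inv_w z))" using hy zr(2) by (metis inv_letter_inv)
      then have "reduced (inv_w z @ y)" using zr yr z(2) by (auto simp: reduced_append)
      moreover have "inv_w (inv_w z) <#\<^bsub>?FG\<^esub> u = u" using z(4) by simp
      moreover have "inv_w z \<noteq> []" using z(2) by (simp add: inv_w_def)
      ultimately show ?thesis using claimB[OF Hs yc uy mini izc _ zu'] by blast
    qed
    then obtain r where r: "r \<in> H" "y \<in> sfx r" by blast
    have "r \<in> generate ?FG S" using r(1) H by simp
    from genA[OF S(2) H this] r(2) have "y <#\<^bsub>?FG\<^esub> H \<in> ?T" by blast
    then show "u \<in> ?T" using uy by simp
  qed
  then show ?thesis using finT finite_subset by blast
qed

theorem mainTheorem10:
  fixes k :: nat and H1 H2 G :: "letter list set"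
  assumes "fin_gen_subgroup k H1"
    and "fin_gen_subgroup k H2"
    and "subgroup G (free_group k)"
    and "G \<subseteq> H1 \<inter> H2"
    and "finite (rcosets\<^bsub>(free_group k)\<lparr>carrier := H1\<rparr>\<^esub> G)"
    and "\<forall>d::nat. d dvd card (rcosets\<^bsub>(free_group k)\<lparr>carrier := H1\<rparr>\<^esub> G) \<and> d \<noteq> 1
            \<longrightarrow> d > card (core_vertices k H2)"
  shows "H1 \<subseteq> H2"
proof (rule ccontr)
  assume nsub: "\<not> H1 \<subseteq> H2"
  let ?FG = "free_group k"
  let ?RG = "{G #>\<^bsub>?FG\<^esub> h | h. h \<in> H1}"
  let ?O = "{h <#\<^bsub>?FG\<^esub> H2 | h. h \<in> H1}"
  let ?n = "card ?RG"
  have H1: "subgroup H1 ?FG" using assms(1) by (simp add: fin_gen_subgroup_def)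
  have H2: "subgroup H2 ?FG" using assms(2) by (simp add: fin_gen_subgroup_def)
  obtain S where S: "finite S" "S \<subseteq> carrier ?FG" "H2 = generate ?FG S"
    using assms(2) by (auto simp: fin_gen_subgroup_def)
  have G: "subgroup G ?FG" by (rule assms(3))
  have GH: "G \<subseteq> H1" "G \<subseteq> H2" using assms(4) by auto
  have RG: "rcosets\<^bsub>?FG\<lparr>carrier := H1\<rparr>\<^esub> G = ?RG" by (rule rcosets_sub)
  have fin: "finite ?RG" using assms(5) RG by simp
  have hyp: "\<And>d. d dvd ?n \<Longrightarrow> d \<noteq> 1 \<Longrightarrow> d > card (core_vertices k H2)"
    using assms(6) RG by simp
  have H2c: "H2 \<subseteq> carrier ?FG" using subgroup.subset[OF H2] .
  have H1c: "\<And>h. h \<in> H1 \<Longrightarrow> h \<in> carrier ?FG" using subgroup.mem_carrier[OF H1] .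
  have finC: "finite (core_vertices k H2)" using core_finite[OF S] .
  from tower[OF H1 H2 G GH fin] have finO: "finite ?O" and dvdO: "card ?O dvd ?n" by auto
  obtain f where f: "f \<in> H1" "f \<notin> H2" using nsub by blast
  have fc: "f \<in> carrier ?FG" using H1c[OF f(1)] .
  have fne: "f \<noteq> []" using f(2) subgroup.one_closed[OF H2] by (auto simp: fg_one)
  obtain u c where uc: "c \<noteq> []" "cyclically_reduced c" "f = u @ c @ inv_w u"
    using cyc_decomp[of f] fc fne by (auto simp: fg_carrier)
  have ucar: "u \<in> carrier ?FG" and ccar: "c \<in> carrier ?FG"
    using fc uc(3) append_carrier by blast+
  let ?t = "inv_w u"
  have tc: "?t \<in> carrier ?FG" using inv_w_carrier[OF ucar] .
  have invt: "inv\<^bsub>?FG\<^esub> ?t = u" using fg_inv[OF tc] by simp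
  have feq: "f = inv\<^bsub>?FG\<^esub> ?t \<otimes>\<^bsub>?FG\<^esub> c \<otimes>\<^bsub>?FG\<^esub> ?t"
  proof -
    have "inv\<^bsub>?FG\<^esub> ?t \<otimes>\<^bsub>?FG\<^esub> c \<otimes>\<^bsub>?FG\<^esub> ?t = red (u @ c @ inv_w u)"
      using invt by (simp add: fg_mult)
    also have "\<dots> = f" using uc(3) fc by (simp add: fg_carrier red_id)
    finally show ?thesis by simp
  qed
  let ?N = "fact ?n :: nat"
  have powG: "\<And>x. x \<in> H1 \<Longrightarrow> x [^]\<^bsub>?FG\<^esub> ?N \<in> G"
    using pigeon_pow[OF G H1 fin] by blast
  let ?z = "concat (replicate ?N c)"
  have Npos: "?N > 0" by simp
  have zpow: "c [^]\<^bsub>?FG\<^esub> ?N = ?z" using pow_word[OF ccar uc(2,1)] .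
  have zc: "?z \<in> carrier ?FG" using fg.nat_pow_closed[OF ccar, of ?N] zpow by simp
  have zne: "?z \<noteq> []" using Npos uc(1) by (cases ?N) auto
  have zcyc: "cyclically_reduced ?z"
    using cyc_red_pow[OF uc(2,1), of ?N] Npos zne uc(2) by (simp add: cyclically_reduced_def)
  have inO: "?t <#\<^bsub>?FG\<^esub> oo \<in> core_vertices k H2" if ooO: "oo \<in> ?O" for oo
  proof -
    obtain h where h: "h \<in> H1" "oo = h <#\<^bsub>?FG\<^esub> H2" using ooO by blast
    have hc: "h \<in> carrier ?FG" using H1c[OF h(1)] .
    let ?y = "?t \<otimes>\<^bsub>?FG\<^esub> h"
    have yc: "?y \<in> carrier ?FG" using tc hc by simp
    have conj1: "inv\<^bsub>?FG\<^esub> ?t \<otimes>\<^bsub>?FG\<^esub> ?z \<otimes>\<^bsub>?FG\<^esub> ?t = f [^]\<^bsub>?FG\<^esub> ?N"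
      using fg.conj_pow[OF tc ccar, of ?N] feq zpow by simp
    have "inv\<^bsub>?FG\<^esub> ?y \<otimes>\<^bsub>?FG\<^esub> (?z \<otimes>\<^bsub>?FG\<^esub> ?y)
        = inv\<^bsub>?FG\<^esub> h \<otimes>\<^bsub>?FG\<^esub> (inv\<^bsub>?FG\<^esub> ?t \<otimes>\<^bsub>?FG\<^esub> ?z \<otimes>\<^bsub>?FG\<^esub> ?t) \<otimes>\<^bsub>?FG\<^esub> h"
      using tc hc zc by (simp add: fg.inv_mult_group fg.m_assoc)
    also have "\<dots> = inv\<^bsub>?FG\<^esub> h \<otimes>\<^bsub>?FG\<^esub> f [^]\<^bsub>?FG\<^esub> ?N \<otimes>\<^bsub>?FG\<^esub> h" using conj1 by simp
    also have "\<dots> = (inv\<^bsub>?FG\<^esub> h \<otimes>\<^bsub>?FG\<^esub> f \<otimes>\<^bsub>?FG\<^esub> h) [^]\<^bsub>?FG\<^esub> ?N"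
      using fg.conj_pow[OF hc fc, of ?N] by simp
    also have "\<dots> \<in> G"
    proof -
      have "inv\<^bsub>?FG\<^esub> h \<otimes>\<^bsub>?FG\<^esub> f \<otimes>\<^bsub>?FG\<^esub> h \<in> H1"
        using subgroup.m_closed[OF H1 subgroup.m_closed[OF H1 subgroup.m_inv_closed[OF H1 h(1)] f(1)] h(1)] .
      then show ?thesis using powG by blast
    qed
    finally have "inv\<^bsub>?FG\<^esub> ?y \<otimes>\<^bsub>?FG\<^esub> (?z \<otimes>\<^bsub>?FG\<^esub> ?y) \<in> H2" using GH(2) by blast
    from core_mem[OF H2 yc zc zne zcyc this]
    have "?y <#\<^bsub>?FG\<^esub> H2 \<in> core_vertices k H2" .
    moreover have "?y <#\<^bsub>?FG\<^esub> H2 = ?t <#\<^bsub>?FG\<^esub> oo"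
      using fg.lcos_m_assoc[OF H2c tc hc] h(2) by simp
    ultimately show ?thesis by simp
  qed
  have injt: "inj_on (\<lambda>oo. ?t <#\<^bsub>?FG\<^esub> oo) ?O"
  proof (rule inj_onI)
    fix o1 o2 assume oo: "o1 \<in> ?O" "o2 \<in> ?O" "?t <#\<^bsub>?FG\<^esub> o1 = ?t <#\<^bsub>?FG\<^esub> o2"
    have sub: "oo \<subseteq> carrier ?FG" if ooO: "oo \<in> ?O" for oo
      using that fg.l_coset_subset_G[OF H2c] H1c by blast
    have "o1 = u <#\<^bsub>?FG\<^esub> (?t <#\<^bsub>?FG\<^esub> o1)"
      using fg.lcos_m_assoc[OF sub[OF oo(1)] ucar tc] fg.lcos_mult_one[OF sub[OF oo(1)]]
      by (simp add: fg_mult fg_one red_inv_cancel2)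
    also have "\<dots> = u <#\<^bsub>?FG\<^esub> (?t <#\<^bsub>?FG\<^esub> o2)" using oo(3) by simp
    also have "\<dots> = o2"
      using fg.lcos_m_assoc[OF sub[OF oo(2)] ucar tc] fg.lcos_mult_one[OF sub[OF oo(2)]]
      by (simp add: fg_mult fg_one red_inv_cancel2)
    finally show "o1 = o2" .
  qed
  have "card ?O = card ((\<lambda>oo. ?t <#\<^bsub>?FG\<^esub> oo) ` ?O)" using card_image[OF injt] by simp
  also have "\<dots> \<le> card (core_vertices k H2)" using inO finC by (intro card_mono) auto
  finally have le: "card ?O \<le> card (core_vertices k H2)" .
  have two: "card ?O \<noteq> 1"
  proof
    assume c1: "card ?O = 1"
    have H2O: "H2 \<in> ?O"
    proof -
      have "[] <#\<^bsub>?FG\<^esub> H2 = H2" using one_lcos[OF H2] .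
      moreover have "[] \<in> H1" using subgroup.one_closed[OF H1] by (simp add: fg_one)
      ultimately show ?thesis by force
    qed
    have fO: "f <#\<^bsub>?FG\<^esub> H2 \<in> ?O" using f(1) by blast
    from c1 obtain x where x: "?O = {x}" by (rule card_1_singletonE)
    have "f <#\<^bsub>?FG\<^esub> H2 = H2" using H2O fO unfolding x by simp
    then have "f <#\<^bsub>?FG\<^esub> H2 = \<one>\<^bsub>?FG\<^esub> <#\<^bsub>?FG\<^esub> H2" using fg.lcos_mult_one[OF H2c] by simp
    then have "inv\<^bsub>?FG\<^esub> \<one>\<^bsub>?FG\<^esub> \<otimes>\<^bsub>?FG\<^esub> f \<in> H2" by (rule lcos_eqD[OF H2 fc fg.one_closed])
    then show False using f(2) fc by simp
  qed
  from hyp[OF dvdO two] le show False by simp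
qed

end
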